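(* Let $N=\ell^2$ for a positive integer $\ell$ and let $x,y\in\{0,1\}^N$. If $\sqrt{N} \ge 3\cdot\textsc{INT}(x,y)$, then the size of the global minimum cut of $G_{x,y}$ equals $2\cdot\textsc{INT}(x,y)$.
   Context: $\textsc{INT}(x,y)=\sum_{i} x_i\wedge y_i$. Index the bits of $x,y\in\{0,1\}^{\ell^2}$ as $x_{i,j},y_{i,j}$ for $1\le i,j\le \ell$. The undirected unweighted graph $G_{x,y}$ has vertex set $A\cup A'\cup B\cup B'$ with $A=\{a_1,\dots,a_\ell\}$, $A'=\{a'_1,\dots,a'_\ell\}$, $B=\{b_1,\dots,b_\ell\}$, $B'=\{b'_1,\dots,b'_\ell\}$ (disjoint), and for each $1\le i,j\le\ell$: if $x_{i,j}=y_{i,j}=1$ then the edges $(a_i,b'_j)$ and $(b_i,a'_j)$ are present; otherwise the edges $(a_i,a'_j)$ and $(b_i,b'_j)$ are present. No other edges exist. The global minimum cut size is $\min_{\varnothing\subset S\subset V}|E(S,V\setminus S)|$. *)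

theory Defs
  imports Complex_Main
begin

text \<open>Vertices of G_{x,y}: a_i, a'_i, b_i, b'_i for 1 \<le> i \<le> l.\<close>
datatype vtx = VA nat | VA' nat | VB nat | VB' nat

text \<open>Bit strings in {0,1}^(l^2) indexed by pairs (i,j), 1 \<le> i,j \<le> l; True = 1.\<close>
type_synonym bits = "nat \<Rightarrow> nat \<Rightarrow> bool"

definition INTf :: "nat \<Rightarrow> bits \<Rightarrow> bits \<Rightarrow> nat" where
  "INTf l x y = card {(i,j). i \<in> {1..l} \<and> j \<in> {1..l} \<and> x i j \<and> y i j}"

definition gverts :: "nat \<Rightarrow> vtx set" where
  "gverts l = VA ` {1..l} \<union> VA' ` {1..l} \<union> VB ` {1..l} \<union> VB' ` {1..l}"

definition gedges :: "nat \<Rightarrow> bits \<Rightarrow> bits \<Rightarrow> vtx set set" where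
  "gedges l x y =
     (\<Union>i\<in>{1..l}. \<Union>j\<in>{1..l}.
        if x i j \<and> y i j then {{VA i, VB' j}, {VB i, VA' j}}
        else {{VA i, VA' j}, {VB i, VB' j}})"

definition cut_size :: "vtx set set \<Rightarrow> vtx set \<Rightarrow> vtx set \<Rightarrow> nat" where
  "cut_size E V S = card {e \<in> E. \<exists>u v. e = {u, v} \<and> u \<in> S \<and> v \<in> V - S}"

definition global_min_cut :: "vtx set \<Rightarrow> vtx set set \<Rightarrow> nat" where
  "global_min_cut V E = Min {cut_size E V S | S. {} \<subset> S \<and> S \<subset> V}"

end

theory Submission
  imports Defs
begin

lemma card_pairs_ge:
  fixes P Q :: "nat set"
  assumes u: "(\<exists>i\<in>{1..l}. i \<in> P) \<or> (\<exists>j\<in>{1..l}. j \<in> Q)"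
    and v: "(\<exists>i\<in>{1..l}. i \<notin> P) \<or> (\<exists>j\<in>{1..l}. j \<notin> Q)"
  shows "l \<le> card {(i,j). i \<in> {1..l} \<and> j \<in> {1..l} \<and> ((i \<in> P \<and> j \<notin> Q) \<or> (i \<notin> P \<and> j \<in> Q))}"
    (is "_ \<le> card ?R")
proof -
  have fin: "finite ?R"
    by (rule finite_subset[of _ "{1..l} \<times> {1..l}"]) auto
  have "\<exists>f. inj_on f {1..l} \<and> f ` {1..l} \<subseteq> ?R"
  proof (cases "(\<exists>i0\<in>{1..l}. i0 \<in> P) \<and> (\<exists>i1\<in>{1..l}. i1 \<notin> P)")
    case True
    then obtain i0 i1 where h: "i0 \<in> {1..l}" "i0 \<in> P" "i1 \<in> {1..l}" "i1 \<notin> P" by blast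
    show ?thesis
      by (rule exI[of _ "\<lambda>j. (if j \<in> Q then i1 else i0, j)"]) (use h in \<open>auto simp: inj_on_def\<close>)
  next
    case False
    then have "(\<forall>i\<in>{1..l}. i \<notin> P) \<or> (\<forall>i\<in>{1..l}. i \<in> P)" by blast
    then show ?thesis
    proof
      assume a: "\<forall>i\<in>{1..l}. i \<notin> P"
      with u obtain j0 where j0: "j0 \<in> {1..l}" "j0 \<in> Q" by blast
      show ?thesis
        by (rule exI[of _ "\<lambda>i. (i, j0)"]) (use a j0 in \<open>auto simp: inj_on_def\<close>)
    next
      assume a: "\<forall>i\<in>{1..l}. i \<in> P"
      with v obtain j0 where j0: "j0 \<in> {1..l}" "j0 \<notin> Q" by blast
      show ?thesis
        by (rule exI[of _ "\<lambda>i. (i, j0)"]) (use a j0 in \<open>auto simp: inj_on_def\<close>)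
    qed
  qed
  then obtain f where "inj_on f {1..l}" "f ` {1..l} \<subseteq> ?R" by blast
  from card_inj_on_le[OF this fin] show ?thesis by simp
qed

lemma cut_lower:
  fixes C D :: "nat \<Rightarrow> vtx" and E :: "vtx set set" and I :: "(nat \<times> nat) set"
  assumes injC: "inj C" and injD: "inj D" and CD: "\<And>i j. C i \<noteq> D j"
    and edges: "\<And>i j. i \<in> {1..l} \<Longrightarrow> j \<in> {1..l} \<Longrightarrow> (i,j) \<notin> I \<Longrightarrow> {C i, D j} \<in> E"
    and finE: "finite E" and finI: "finite I"
    and sub: "C ` {1..l} \<union> D ` {1..l} \<subseteq> V"
    and u: "\<exists>w\<in>C ` {1..l} \<union> D ` {1..l}. w \<in> S"
    and v: "\<exists>w\<in>C ` {1..l} \<union> D ` {1..l}. w \<notin> S"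
  shows "l - card I \<le> cut_size E V S"
proof -
  define P where "P = {i. C i \<in> S}"
  define Q where "Q = {j. D j \<in> S}"
  define R where "R = {(i,j). i \<in> {1..l} \<and> j \<in> {1..l} \<and> ((i \<in> P \<and> j \<notin> Q) \<or> (i \<notin> P \<and> j \<in> Q))}"
  have u': "(\<exists>i\<in>{1..l}. i \<in> P) \<or> (\<exists>j\<in>{1..l}. j \<in> Q)" using u by (auto simp: P_def Q_def)
  have v': "(\<exists>i\<in>{1..l}. i \<notin> P) \<or> (\<exists>j\<in>{1..l}. j \<notin> Q)" using v by (auto simp: P_def Q_def)
  have l1: "l \<le> card R" unfolding R_def by (rule card_pairs_ge[OF u' v'])
  have finR: "finite R" unfolding R_def
    by (rule finite_subset[of _ "{1..l} \<times> {1..l}"]) auto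
  have l2: "card R - card I \<le> card (R - I)" by (rule diff_card_le_card_Diff[OF finI])
  define f where "f = (\<lambda>(i,j). {C i, D j})"
  have injf: "inj_on f (R - I)"
  proof (rule inj_onI)
    fix a b assume "a \<in> R - I" "b \<in> R - I" "f a = f b"
    obtain i j where a: "a = (i,j)" by force
    obtain i' j' where b: "b = (i',j')" by force
    have "{C i, D j} = {C i', D j'}" using \<open>f a = f b\<close> by (simp add: f_def a b)
    then have "C i = C i' \<and> D j = D j'" using CD by (auto simp: doubleton_eq_iff)
    then show "a = b" using injC injD by (auto simp: a b inj_def)
  qed
  let ?cut = "{e \<in> E. \<exists>u v. e = {u, v} \<and> u \<in> S \<and> v \<in> V - S}"
  have img: "f ` (R - I) \<subseteq> ?cut"
  proof
    fix e assume "e \<in> f ` (R - I)"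
    then obtain i j where ij: "(i,j) \<in> R" "(i,j) \<notin> I" "e = {C i, D j}"
      by (auto simp: f_def)
    have ii: "i \<in> {1..l}" "j \<in> {1..l}" using ij(1) by (auto simp: R_def)
    have inE: "e \<in> E" using edges[OF ii ij(2)] ij(3) by simp
    have CV: "C i \<in> V" "D j \<in> V" using sub ii by auto
    from ij(1) have "(C i \<in> S \<and> D j \<notin> S) \<or> (C i \<notin> S \<and> D j \<in> S)"
      by (auto simp: R_def P_def Q_def)
    then show "e \<in> ?cut"
    proof
      assume "C i \<in> S \<and> D j \<notin> S"
      then show ?thesis using inE ij(3) CV by blast
    next
      assume "C i \<notin> S \<and> D j \<in> S"
      then show ?thesis using inE ij(3) CV by (auto simp: insert_commute)
    qed
  qed
  have finC: "finite ?cut" using finE by simp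
  have "card (R - I) \<le> card ?cut"
    using card_inj_on_le[OF injf img finC] .
  then show ?thesis using l1 l2 unfolding cut_size_def by linarith
qed

lemma finE: "finite (gedges l x y)"
  unfolding gedges_def by auto

lemma finV: "finite (gverts l)"
  unfolding gverts_def by auto

theorem lemma5p5:
  fixes l N :: nat and x y :: bits
  assumes "l > 0" and "N = l^2"
    and "sqrt (real N) \<ge> 3 * real (INTf l x y)"
  shows "global_min_cut (gverts l) (gedges l x y) = 2 * INTf l x y"
proof -
  define I where "I = {(i,j). i \<in> {1..l} \<and> j \<in> {1..l} \<and> x i j \<and> y i j}"
  define k where "k = card I"
  define E where "E = gedges l x y"
  define V where "V = gverts l"
  have kdef: "INTf l x y = k" by (simp add: INTf_def k_def I_def)
  have "sqrt (real N) = real l" using assms(2) by simp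
  then have lk: "3 * k \<le> l" using assms(3) kdef by simp
  have finI: "finite I" unfolding I_def
    by (rule finite_subset[of _ "{1..l} \<times> {1..l}"]) auto
  have finE': "finite E" using finE by (simp add: E_def)
  define X where "X = VA ` {1..l} \<union> VA' ` {1..l}"
  define Y where "Y = VB ` {1..l} \<union> VB' ` {1..l}"
  have VXY: "V = X \<union> Y" by (auto simp: V_def X_def Y_def gverts_def)
  have XY: "X \<inter> Y = {}" by (auto simp: X_def Y_def)
  define SE where "SE = (\<lambda>(i,j). {VA i, VB' j}) ` I \<union> (\<lambda>(i,j). {VB i, VA' j}) ` I"
  have cardSE: "card SE = 2 * k"
  proof -
    have i1: "inj_on (\<lambda>(i,j). {VA i, VB' j}) I"
      by (auto simp: inj_on_def doubleton_eq_iff)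
    have i2: "inj_on (\<lambda>(i,j). {VB i, VA' j}) I"
      by (auto simp: inj_on_def doubleton_eq_iff)
    have d: "(\<lambda>(i,j). {VA i, VB' j}) ` I \<inter> (\<lambda>(i,j). {VB i, VA' j}) ` I = {}"
      by (auto simp: doubleton_eq_iff)
    show ?thesis unfolding SE_def
      by (subst card_Un_disjoint) (use finI d card_image[OF i1] card_image[OF i2] k_def in auto)
  qed
  have SEE: "SE \<subseteq> E"
  proof
    fix e assume "e \<in> SE"
    then obtain i j where ij: "i \<in> {1..l}" "j \<in> {1..l}" "x i j" "y i j"
      "e = {VA i, VB' j} \<or> e = {VB i, VA' j}"
      by (auto simp: SE_def I_def)
    show "e \<in> E" unfolding E_def gedges_def
      by (rule UN_I[OF ij(1)], rule UN_I[OF ij(2)]) (use ij in auto)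
  qed
  let ?cut = "\<lambda>S. {e \<in> E. \<exists>u v. e = {u, v} \<and> u \<in> S \<and> v \<in> V - S}"
  have lower: "2 * k \<le> cut_size E V S" if S: "{} \<subset> S" "S \<subset> V" for S
  proof (cases "(\<exists>w\<in>X. w \<in> S) \<and> (\<exists>w\<in>X. w \<notin> S)")
    case True
    have "l - card I \<le> cut_size E V S"
    proof (rule cut_lower[where C=VA and D=VA' and I=I])
      show "inj VA" "inj VA'" by (auto simp: inj_def)
      show "\<And>i j. VA i \<noteq> VA' j" by simp
      show "\<And>i j. i \<in> {1..l} \<Longrightarrow> j \<in> {1..l} \<Longrightarrow> (i,j) \<notin> I \<Longrightarrow> {VA i, VA' j} \<in> E"
        unfolding E_def gedges_def
        by (rule UN_I, assumption, rule UN_I, assumption) (auto simp: I_def)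
    qed (use finE' finI True in \<open>auto simp: X_def V_def gverts_def\<close>)
    then show ?thesis using lk k_def by linarith
  next
    case F1: False
    show ?thesis
    proof (cases "(\<exists>w\<in>Y. w \<in> S) \<and> (\<exists>w\<in>Y. w \<notin> S)")
      case True
      have "l - card I \<le> cut_size E V S"
      proof (rule cut_lower[where C=VB and D=VB' and I=I])
        show "inj VB" "inj VB'" by (auto simp: inj_def)
        show "\<And>i j. VB i \<noteq> VB' j" by simp
        show "\<And>i j. i \<in> {1..l} \<Longrightarrow> j \<in> {1..l} \<Longrightarrow> (i,j) \<notin> I \<Longrightarrow> {VB i, VB' j} \<in> E"
          unfolding E_def gedges_def
          by (rule UN_I, assumption, rule UN_I, assumption) (auto simp: I_def)
      qed (use finE' finI True in \<open>auto simp: Y_def V_def gverts_def\<close>)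
      then show ?thesis using lk k_def by linarith
    next
      case F2: False
      have c: "(X \<subseteq> S \<and> Y \<inter> S = {}) \<or> (X \<inter> S = {} \<and> Y \<subseteq> S)"
        using F1 F2 S VXY XY by blast
      have "SE \<subseteq> ?cut S"
      proof
        fix e assume e: "e \<in> SE"
        have eE: "e \<in> E" using e SEE by blast
        from e obtain i j where ij: "i \<in> {1..l}" "j \<in> {1..l}"
          "e = {VA i, VB' j} \<or> e = {VB i, VA' j}"
          by (auto simp: SE_def I_def)
        have m: "VA i \<in> X" "VA' j \<in> X" "VB i \<in> Y" "VB' j \<in> Y"
          using ij by (auto simp: X_def Y_def)
        have mv: "VA i \<in> V" "VA' j \<in> V" "VB i \<in> V" "VB' j \<in> V" using m VXY by auto
        from c show "e \<in> ?cut S"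
        proof
          assume h: "X \<subseteq> S \<and> Y \<inter> S = {}"
          have s: "VA i \<in> S" "VA' j \<in> S" "VB i \<notin> S" "VB' j \<notin> S" using h m by auto
          from ij(3) show ?thesis
          proof
            assume "e = {VA i, VB' j}" then show ?thesis using s mv eE by blast
          next
            assume "e = {VB i, VA' j}" then have "e = {VA' j, VB i}" by (simp add: insert_commute)
            then show ?thesis using s mv eE by blast
          qed
        next
          assume h: "X \<inter> S = {} \<and> Y \<subseteq> S"
          have s: "VA i \<notin> S" "VA' j \<notin> S" "VB i \<in> S" "VB' j \<in> S" using h m by auto
          from ij(3) show ?thesis
          proof
            assume "e = {VA i, VB' j}" then have "e = {VB' j, VA i}" by (simp add: insert_commute)
            then show ?thesis using s mv eE by blast
          next
            assume "e = {VB i, VA' j}" then show ?thesis using s mv eE by blast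
          qed
        qed
      qed
      then have "card SE \<le> cut_size E V S"
        unfolding cut_size_def by (rule card_mono[rotated]) (use finE' in simp)
      then show ?thesis using cardSE by simp
    qed
  qed
  define X0 where "X0 = X"
  have X0: "{} \<subset> X" "X \<subset> V"
  proof -
    have "VA 1 \<in> X" "VB 1 \<in> Y" using assms(1) by (auto simp: X_def Y_def)
    then show "{} \<subset> X" "X \<subset> V" using XY VXY by auto
  qed
  have up: "cut_size E V X \<le> 2 * k"
  proof -
    have "?cut X \<subseteq> SE"
    proof
      fix e assume e: "e \<in> ?cut X"
      then obtain u v where uv: "e = {u,v}" "u \<in> X" "v \<in> V - X" "e \<in> E" by blast
      from uv(4) obtain i j where ij: "i \<in> {1..l}" "j \<in> {1..l}"
        "(x i j \<and> y i j \<and> (e = {VA i, VB' j} \<or> e = {VB i, VA' j})) \<or>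
         (\<not>(x i j \<and> y i j) \<and> (e = {VA i, VA' j} \<or> e = {VB i, VB' j}))"
        by (auto simp: E_def gedges_def split: if_splits)
      show "e \<in> SE"
        using ij uv VXY XY by (auto simp: SE_def I_def X_def Y_def doubleton_eq_iff)
    qed
    then have "cut_size E V X \<le> card SE"
      unfolding cut_size_def by (rule card_mono[rotated]) (simp add: SE_def finI)
    then show ?thesis using cardSE by simp
  qed
  let ?M = "{cut_size E V S | S. {} \<subset> S \<and> S \<subset> V}"
  have finM: "finite ?M"
  proof -
    have "?M \<subseteq> (\<lambda>S. cut_size E V S) ` Pow V" by auto
    moreover have "finite V" using finV by (simp add: V_def)
    ultimately show ?thesis using finite_subset by blast
  qed
  have inM: "cut_size E V X \<in> ?M" using X0 by blast
  have "Min ?M \<le> 2 * k" using Min_le[OF finM inM] up by linarith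
  moreover have "2 * k \<le> Min ?M"
    using finM inM lower by (subst Min_ge_iff) auto
  ultimately show ?thesis unfolding global_min_cut_def E_def[symmetric] V_def[symmetric] kdef
    by simp
qed

end
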